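(* Let $N_1,N_2\ge 1$ be integers, let $0\le q<1$, and consider the following stochastic particle system (a version of the Biham--Middleton--Levine traffic model) on the toroidal lattice of cells $(i,j)$, $i\in\mathbb{Z}/N_1\mathbb{Z}$, $j\in\mathbb{Z}/N_2\mathbb{Z}$. There are $m<N_1N_2$ particles, each cell is vacant or occupied by exactly one particle, and at each moment every particle is of the first type or of the second type. Time is discrete, $t=0,1,2,\dots$. At each step, first all particles of the first type move: a first-type particle in cell $(i,j)$ moves to cell $(i,j+1)$ (index modulo $N_2$) if that cell is vacant, and stays in $(i,j)$ otherwise. Then all particles of the second type move, with respect to the configuration obtained after the first-type movement: a second-type particle in cell $(i,j)$ moves to $(i+1,j)$ (index modulo $N_1$) if that cell is vacant, and stays in $(i,j)$ otherwise. After that, each particle changes its type with probability $q$. A state (positions and types of all particles) is called a state of free movement if, whenever the system is in this state at some time $t_0$, then with probability $1$ at every step from $t_0$ on every particle moves (no particle is ever delayed). If the greatest common divisor of $N_1$ and $N_2$ is less than $3$, then no state in which there is at least one particle of the first type and at least one particle of the second type is a state of free movement.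
   Context: A particle is "delayed" at a step if the cell ahead of it (to the right along its row for the first type, upward along its column for the second type) is occupied at the moment it attempts to move, so that it stays in place. *)

theory Defs
  imports "HOL-Probability.Probability"
begin

text \<open>A state of the BML-type system on the torus (Z/N1) x (Z/N2): cell (i,j) with
  i < N1, j < N2.  s c = None: vacant; Some True: particle of the first type;
  Some False: particle of the second type.\<close>

type_synonym state = "nat \<times> nat \<Rightarrow> bool option"

definition cells :: "nat \<Rightarrow> nat \<Rightarrow> (nat \<times> nat) set" where
  "cells N1 N2 = {0..<N1} \<times> {0..<N2}"

definition right :: "nat \<Rightarrow> nat \<times> nat \<Rightarrow> nat \<times> nat" where
  "right N2 c = (fst c, (snd c + 1) mod N2)"

definition left :: "nat \<Rightarrow> nat \<times> nat \<Rightarrow> nat \<times> nat" where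
  "left N2 c = (fst c, (snd c + N2 - 1) mod N2)"

definition up :: "nat \<Rightarrow> nat \<times> nat \<Rightarrow> nat \<times> nat" where
  "up N1 c = ((fst c + 1) mod N1, snd c)"

definition down :: "nat \<Rightarrow> nat \<times> nat \<Rightarrow> nat \<times> nat" where
  "down N1 c = ((fst c + N1 - 1) mod N1, snd c)"

definition wf_state :: "nat \<Rightarrow> nat \<Rightarrow> state \<Rightarrow> bool" where
  "wf_state N1 N2 s \<longleftrightarrow> (\<forall>c. c \<notin> cells N1 N2 \<longrightarrow> s c = None)
     \<and> card {c \<in> cells N1 N2. s c \<noteq> None} < N1 * N2"

definition move1 :: "nat \<Rightarrow> nat \<Rightarrow> state \<Rightarrow> state" where
  "move1 N1 N2 s = (\<lambda>c. if c \<notin> cells N1 N2 then None else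
     (case s c of
        Some True \<Rightarrow> (if s (right N2 c) = None then None else Some True)
      | Some False \<Rightarrow> Some False
      | None \<Rightarrow> (if s (left N2 c) = Some True then Some True else None)))"

definition move2 :: "nat \<Rightarrow> nat \<Rightarrow> state \<Rightarrow> state" where
  "move2 N1 N2 s = (\<lambda>c. if c \<notin> cells N1 N2 then None else
     (case s c of
        Some False \<Rightarrow> (if s (up N1 c) = None then None else Some False)
      | Some True \<Rightarrow> Some True
      | None \<Rightarrow> (if s (down N1 c) = Some False then Some False else None)))"

definition delayed :: "nat \<Rightarrow> nat \<Rightarrow> state \<Rightarrow> bool" where
  "delayed N1 N2 s \<longleftrightarrow> (\<exists>c \<in> cells N1 N2.
       (s c = Some True \<and> s (right N2 c) \<noteq> None)
     \<or> (move1 N1 N2 s c = Some False \<and> move1 N1 N2 s (up N1 c) \<noteq> None))"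

definition step_pmf :: "nat \<Rightarrow> nat \<Rightarrow> real \<Rightarrow> state \<Rightarrow> state pmf" where
  "step_pmf N1 N2 q s =
     map_pmf (\<lambda>f c. map_option (\<lambda>b. if f c then \<not> b else b) (move2 N1 N2 (move1 N1 N2 s) c))
       (Pi_pmf (cells N1 N2) False (\<lambda>_. bernoulli_pmf q))"

fun state_dist :: "nat \<Rightarrow> nat \<Rightarrow> real \<Rightarrow> state \<Rightarrow> nat \<Rightarrow> state pmf" where
  "state_dist N1 N2 q s 0 = return_pmf s"
| "state_dist N1 N2 q s (Suc n) = bind_pmf (state_dist N1 N2 q s n) (step_pmf N1 N2 q)"

text \<open>State of free movement: with probability 1, at every step no particle is delayed
  (equivalently, by countable additivity, for every step n the probability that some
  particle is delayed at step n is 0).\<close>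
definition free_movement :: "nat \<Rightarrow> nat \<Rightarrow> real \<Rightarrow> state \<Rightarrow> bool" where
  "free_movement N1 N2 q s \<longleftrightarrow>
     (\<forall>n. measure_pmf.prob (state_dist N1 N2 q s n) {s'. delayed N1 N2 s'} = 0)"

end

theory Submission
  imports Defs
begin

definition Dstep :: "nat \<Rightarrow> nat \<Rightarrow> state \<Rightarrow> state" where
  "Dstep N1 N2 s = move2 N1 N2 (move1 N1 N2 s)"

lemma false_in_Pi:
  assumes "0 \<le> q" "q < 1"
  shows "(\<lambda>_. False) \<in> set_pmf (Pi_pmf (cells N1 N2) False (\<lambda>_. bernoulli_pmf q))"
proof -
  have fin: "finite (cells N1 N2)" by (simp add: cells_def)
  have "pmf (Pi_pmf (cells N1 N2) False (\<lambda>_. bernoulli_pmf q)) (\<lambda>_. False)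
        = (\<Prod>x\<in>cells N1 N2. 1 - q)"
    using assms by (simp add: pmf_Pi[OF fin])
  also have "\<dots> > 0" using assms by (intro prod_pos) auto
  finally show ?thesis by (simp add: set_pmf_iff)
qed

lemma D_in_step:
  assumes "0 \<le> q" "q < 1"
  shows "Dstep N1 N2 x \<in> set_pmf (step_pmf N1 N2 q x)"
proof -
  have "Dstep N1 N2 x = (\<lambda>f c. map_option (\<lambda>b. if f c then \<not> b else b) (move2 N1 N2 (move1 N1 N2 x) c)) (\<lambda>_. False)"
    by (simp add: Dstep_def option.map_id0[unfolded id_def] fun_eq_iff option.map_ident)
  then show ?thesis unfolding step_pmf_def set_map_pmf
    by (rule image_eqI[OF _ false_in_Pi[OF assms]])
qed

lemma D_in_dist:
  assumes "0 \<le> q" "q < 1"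
  shows "(Dstep N1 N2 ^^ n) s \<in> set_pmf (state_dist N1 N2 q s n)"
  by (induction n) (auto intro!: D_in_step[OF assms])

lemma left_right: "N2 \<ge> 1 \<Longrightarrow> snd c < N2 \<Longrightarrow> left N2 (right N2 c) = c"
proof -
  assume a: "N2 \<ge> 1" "snd c < N2"
  show ?thesis
  proof (cases "snd c + 1 < N2")
    case True
    then show ?thesis unfolding left_def right_def by (cases c) simp
  next
    case False
    then have "snd c + 1 = N2" using a by simp
    then show ?thesis unfolding left_def right_def by (cases c) simp
  qed
qed

lemma down_up: "N1 \<ge> 1 \<Longrightarrow> fst c < N1 \<Longrightarrow> down N1 (up N1 c) = c"
proof -
  assume a: "N1 \<ge> 1" "fst c < N1"
  show ?thesis
  proof (cases "fst c + 1 < N1")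
    case True
    then show ?thesis unfolding down_def up_def by (cases c) simp
  next
    case False
    then have "fst c + 1 = N1" using a by simp
    then show ?thesis unfolding down_def up_def by (cases c) simp
  qed
qed

lemma right_cells: "N2 \<ge> 1 \<Longrightarrow> c \<in> cells N1 N2 \<Longrightarrow> right N2 c \<in> cells N1 N2"
  by (cases c) (auto simp: cells_def right_def)

lemma up_cells: "N1 \<ge> 1 \<Longrightarrow> c \<in> cells N1 N2 \<Longrightarrow> up N1 c \<in> cells N1 N2"
  by (cases c) (auto simp: cells_def up_def)

lemma step_T:
  assumes "N2 \<ge> 1" "c \<in> cells N1 N2" "\<not> delayed N1 N2 s" "s c = Some True"
  shows "Dstep N1 N2 s (right N2 c) = Some True"
proof -
  have rc: "right N2 c \<in> cells N1 N2" using assms right_cells by blast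
  have "s (right N2 c) = None" using assms unfolding delayed_def by blast
  moreover have "left N2 (right N2 c) = c"
    using assms by (intro left_right) (auto simp: cells_def)
  ultimately have "move1 N1 N2 s (right N2 c) = Some True"
    using rc assms by (simp add: move1_def)
  then show ?thesis using rc by (simp add: Dstep_def move2_def)
qed

lemma step_F:
  assumes "N1 \<ge> 1" "c \<in> cells N1 N2" "\<not> delayed N1 N2 s" "s c = Some False"
  shows "Dstep N1 N2 s (up N1 c) = Some False"
proof -
  have uc: "up N1 c \<in> cells N1 N2" using assms up_cells by blast
  have m: "move1 N1 N2 s c = Some False" using assms by (simp add: move1_def)
  then have "move1 N1 N2 s (up N1 c) = None" using assms unfolding delayed_def by blast
  moreover have "down N1 (up N1 c) = c"
    using assms by (intro down_up) (auto simp: cells_def)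
  ultimately show ?thesis
    using uc m by (simp add: Dstep_def move2_def)
qed

lemma track:
  assumes "N1 \<ge> 1" "N2 \<ge> 1" "a \<in> cells N1 N2" "b \<in> cells N1 N2"
    "s a = Some True" "s b = Some False"
  shows "(\<forall>k<n. \<not> delayed N1 N2 ((Dstep N1 N2 ^^ k) s)) \<longrightarrow>
    (Dstep N1 N2 ^^ n) s (fst a, (snd a + n) mod N2) = Some True \<and>
    (Dstep N1 N2 ^^ n) s ((fst b + n) mod N1, snd b) = Some False"
proof (induction n)
  case 0
  have "snd a mod N2 = snd a" "fst b mod N1 = fst b" using assms by (auto simp: cells_def)
  then show ?case using assms by simp
next
  case (Suc n)
  show ?case
  proof
    assume h: "\<forall>k<Suc n. \<not> delayed N1 N2 ((Dstep N1 N2 ^^ k) s)"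
    then have IH: "(Dstep N1 N2 ^^ n) s (fst a, (snd a + n) mod N2) = Some True \<and>
      (Dstep N1 N2 ^^ n) s ((fst b + n) mod N1, snd b) = Some False" using Suc by auto
    have nd: "\<not> delayed N1 N2 ((Dstep N1 N2 ^^ n) s)" using h by auto
    have ca: "(fst a, (snd a + n) mod N2) \<in> cells N1 N2" using assms by (auto simp: cells_def)
    have cb: "((fst b + n) mod N1, snd b) \<in> cells N1 N2" using assms by (auto simp: cells_def)
    have r: "right N2 (fst a, (snd a + n) mod N2) = (fst a, (snd a + Suc n) mod N2)"
      by (simp add: right_def mod_Suc_eq)
    have u: "up N1 ((fst b + n) mod N1, snd b) = ((fst b + Suc n) mod N1, snd b)"
      by (simp add: up_def mod_Suc_eq)
    show "(Dstep N1 N2 ^^ Suc n) s (fst a, (snd a + Suc n) mod N2) = Some True \<and>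
      (Dstep N1 N2 ^^ Suc n) s ((fst b + Suc n) mod N1, snd b) = Some False"
      using step_T[OF assms(2) ca nd] step_F[OF assms(1) cb nd] IH r u by simp
  qed
qed

lemma delayed_at:
  assumes "N2 \<ge> 1" "p \<in> cells N1 N2" "r \<in> cells N1 N2" "s p = Some True" "s r = Some False"
    "right N2 p = r \<or> right N2 p = up N1 r"
  shows "delayed N1 N2 s"
proof (cases "s (right N2 p) = None")
  case False
  then show ?thesis using assms unfolding delayed_def by blast
next
  case True
  have "left N2 (right N2 p) = p"
    using assms by (intro left_right) (auto simp: cells_def)
  then have "move1 N1 N2 s (right N2 p) = Some True"
    using True assms right_cells[OF assms(1,2)] by (simp add: move1_def)
  moreover have "move1 N1 N2 s r = Some False" using assms by (simp add: move1_def)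
  moreover have "right N2 p = up N1 r" using assms True by auto
  ultimately show ?thesis using assms unfolding delayed_def by auto
qed

lemma crt:
  fixes u v :: int
  assumes "N1 \<ge> 1" "N2 \<ge> 1" "int (gcd N1 N2) dvd (u - v)"
  shows "\<exists>m::nat. m \<ge> 1 \<and> int m mod int N1 = u mod int N1 \<and> int m mod int N2 = v mod int N2"
proof -
  obtain x y where xy: "x * int N1 + y * int N2 = gcd (int N1) (int N2)"
    using bezout_int by blast
  have g: "gcd (int N1) (int N2) = int (gcd N1 N2)" by simp
  obtain k where k: "u - v = int (gcd N1 N2) * k" using assms(3) by blast
  define n where "n = u - k * x * int N1"
  have e: "x * int N1 + y * int N2 = int (gcd N1 N2)" using xy g by simp
  have "n - (v + k * y * int N2) = (u - v) - k * (x * int N1 + y * int N2)"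
    unfolding n_def by (simp add: algebra_simps)
  also have "\<dots> = 0" unfolding e k by simp
  finally have n2: "n = v + k * y * int N2" by simp
  define m where "m = nat (n mod (int N1 * int N2)) + N1 * N2"
  have pos: "int N1 * int N2 > 0" using assms by simp
  have im: "int m = n mod (int N1 * int N2) + int N1 * int N2"
    using pos unfolding m_def by simp
  have "int m mod int N1 = n mod int N1"
    unfolding im by (simp add: mod_mod_cancel)
  also have "\<dots> = u mod int N1" unfolding n_def by (simp add: mod_diff_eq[symmetric])
  finally have 1: "int m mod int N1 = u mod int N1" .
  have "int m mod int N2 = n mod int N2"
    unfolding im by (simp add: mod_mod_cancel)
  also have "\<dots> = v mod int N2" unfolding n2 by simp
  finally have 2: "int m mod int N2 = v mod int N2" .
  have "1 \<le> N1 * N2" using assms by (simp add: Suc_le_eq)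
  then have "m \<ge> 1" unfolding m_def by linarith
  with 1 2 show ?thesis by blast
qed

lemma exists_hit:
  assumes "N1 \<ge> 1" "N2 \<ge> 1" "gcd N1 N2 < 3" "a1 < N1" "a2 < N2" "b1 < N1" "b2 < N2"
  shows "\<exists>n. right N2 (a1, (a2 + n) mod N2) = ((b1 + n) mod N1, b2) \<or>
             right N2 (a1, (a2 + n) mod N2) = up N1 ((b1 + n) mod N1, b2)"
proof -
  define g where "g = gcd N1 N2"
  have "g \<noteq> 0" using assms unfolding g_def by simp
  then have g12: "g = 1 \<or> g = 2" using assms(3) unfolding g_def[symmetric] by linarith
  define w where "w = int a1 - int b1 - (int b2 - int a2)"
  have "(2::int) dvd (w + 1) \<or> 2 dvd w" by presburger
  then have "int g dvd (w + 1) \<or> int g dvd w" using g12 by auto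
  then show ?thesis
  proof
    assume d: "int g dvd (w + 1)"
    have "int g dvd ((int a1 - int b1) - (int b2 - int a2 - 1))" using d unfolding w_def by (simp add: algebra_simps)
    then obtain m :: nat where m: "int m mod int N1 = (int a1 - int b1) mod int N1"
      "int m mod int N2 = (int b2 - int a2 - 1) mod int N2"
      using crt[OF assms(1,2)] unfolding g_def by blast
    have "int ((b1 + m) mod N1) = (int b1 + int m) mod int N1" by (simp add: zmod_int)
    also have "\<dots> = (int b1 + (int a1 - int b1)) mod int N1" using m(1) by (metis mod_add_right_eq)
    also have "\<dots> = int a1" using assms by simp
    finally have 1: "(b1 + m) mod N1 = a1" by linarith
    have "int ((a2 + m + 1) mod N2) = (int a2 + 1 + int m) mod int N2" by (simp add: zmod_int algebra_simps)
    also have "\<dots> = (int a2 + 1 + (int b2 - int a2 - 1)) mod int N2" using m(2) by (metis mod_add_right_eq)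
    also have "\<dots> = int b2" using assms by simp
    finally have 2: "(a2 + m + 1) mod N2 = b2" by linarith
    have "right N2 (a1, (a2 + m) mod N2) = ((b1 + m) mod N1, b2)"
      using 1 2 by (simp add: right_def mod_Suc_eq)
    then show ?thesis by blast
  next
    assume d: "int g dvd w"
    have "int g dvd ((int a1 - int b1) - (int b2 - int a2))" using d unfolding w_def by simp
    then obtain m :: nat where m: "m \<ge> 1" "int m mod int N1 = (int a1 - int b1) mod int N1"
      "int m mod int N2 = (int b2 - int a2) mod int N2"
      using crt[OF assms(1,2)] unfolding g_def by blast
    have "int ((b1 + m) mod N1) = (int b1 + int m) mod int N1" by (simp add: zmod_int)
    also have "\<dots> = (int b1 + (int a1 - int b1)) mod int N1" using m(2) by (metis mod_add_right_eq)
    also have "\<dots> = int a1" using assms by simp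
    finally have 1: "(b1 + m) mod N1 = a1" by linarith
    have "int ((a2 + m) mod N2) = (int a2 + int m) mod int N2" by (simp add: zmod_int)
    also have "\<dots> = (int a2 + (int b2 - int a2)) mod int N2" using m(3) by (metis mod_add_right_eq)
    also have "\<dots> = int b2" using assms by simp
    finally have 2: "(a2 + m) mod N2 = b2" by linarith
    define n where "n = m - 1"
    have mn: "m = Suc n" using m(1) unfolding n_def by simp
    have "right N2 (a1, (a2 + n) mod N2) = up N1 ((b1 + n) mod N1, b2)"
      using 1 2 unfolding mn by (simp add: right_def up_def mod_Suc_eq)
    then show ?thesis by blast
  qed
qed

theorem theorem1:
  fixes N1 N2 :: nat and q :: real and s :: state
  assumes "N1 \<ge> 1" and "N2 \<ge> 1"
    and "0 \<le> q" and "q < 1"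
    and "gcd N1 N2 < 3"
    and "wf_state N1 N2 s"
    and "\<exists>c. s c = Some True"
    and "\<exists>c. s c = Some False"
  shows "\<not> free_movement N1 N2 q s"
proof
  assume fm: "free_movement N1 N2 q s"
  have nd: "\<not> delayed N1 N2 ((Dstep N1 N2 ^^ k) s)" for k
  proof
    assume "delayed N1 N2 ((Dstep N1 N2 ^^ k) s)"
    then have "measure_pmf.prob (state_dist N1 N2 q s k) {s'. delayed N1 N2 s'} > 0"
      by (intro measure_pmf_posI[OF D_in_dist[OF assms(3,4)]]) simp
    then show False using fm unfolding free_movement_def by simp
  qed
  obtain a b where ab: "s a = Some True" "s b = Some False" using assms(7,8) by blast
  have cab: "a \<in> cells N1 N2" "b \<in> cells N1 N2"
    using ab assms(6) unfolding wf_state_def by (metis option.distinct(1))+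
  obtain a1 a2 b1 b2 where abe: "a = (a1, a2)" "b = (b1, b2)" by (cases a, cases b) auto
  have lt: "a1 < N1" "a2 < N2" "b1 < N1" "b2 < N2" using cab abe by (auto simp: cells_def)
  obtain n where hit: "right N2 (a1, (a2 + n) mod N2) = ((b1 + n) mod N1, b2) \<or>
             right N2 (a1, (a2 + n) mod N2) = up N1 ((b1 + n) mod N1, b2)"
    using exists_hit[OF assms(1,2,5) lt] by blast
  have tr: "(Dstep N1 N2 ^^ n) s (a1, (a2 + n) mod N2) = Some True \<and>
    (Dstep N1 N2 ^^ n) s ((b1 + n) mod N1, b2) = Some False"
    using track[OF assms(1,2) cab ab, of n] nd abe by simp
  have "delayed N1 N2 ((Dstep N1 N2 ^^ n) s)"
    using tr hit lt assms(1,2)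
    by (intro delayed_at[where p = "(a1, (a2 + n) mod N2)" and r = "((b1 + n) mod N1, b2)"])
       (auto simp: cells_def)
  then show False using nd by blast
qed

end
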